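(* Let $X$ be a Banach space, $\mathbb F\subseteq\mathbb D$ finite, and $(h,i)\in\mathbb F$ an $\mathbb F$-admissible index. If $f_{\mathbb F}=\sum_{(k,j)\in\mathbb F}x_k^{(j)}\chi_k^{(j)}$ with $x_k^{(j)}\in X$, then there exist elements $y_k^{(j)}\in X$, $(k,j)\in\Phi_h^{(i)}(\mathbb F)$, such that $$f_{\mathbb F}\circ\phi_h^{(i)}=\sum_{(k,j)\in\Phi_h^{(i)}(\mathbb F)}y_k^{(j)}\chi_k^{(j)}\quad\text{and}\quad\sum_{(k,j)\in\mathbb F}\|x_k^{(j)}\|^2=\sum_{(k,j)\in\Phi_h^{(i)}(\mathbb F)}\|y_k^{(j)}\|^2.$$
   Context: Dyadic intervals: $\Delta_k^{(j)}:=[\frac{j-1}{2^k},\frac{j}{2^k})$ for $k\ge0$. Haar functions: for $k\ge1$, integer $j$, $\chi_k^{(j)}(t)=+2^{(k-1)/2}$ on $\Delta_k^{(2j-1)}$, $-2^{(k-1)/2}$ on $\Delta_k^{(2j)}$, $0$ otherwise, $t\in[0,1)$. Dyadic tree $\mathbb D:=\{(k,j):k\ge1;\ j=1,\dots,2^{k-1}\}$. For $(h,i)\in\mathbb D$, $\phi_h^{(i)}:[0,1)\to[0,1)$ is $t\mapsto t+2^{-(h+1)}$ on $\Delta_{h+1}^{(4i-2)}$, $t\mapsto t-2^{-(h+1)}$ on $\Delta_{h+1}^{(4i-1)}$, identity otherwise. An index $(h,i)\in\mathbb F$ is $\mathbb F$-admissible if neither $(h+1,2i-1)$ nor $(h+1,2i)$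 belongs to $\mathbb F$. Fork: $\mathbb F_h^{(i)}:=\{(h,i),(h+1,2i-1),(h+1,2i)\}$. For $(k,j)\in\mathbb D$ define $j^\ast$: $j^\ast=j+2^{k-h-2}$ if $\Delta_{k-1}^{(j)}\subseteq\Delta_{h+1}^{(4i-2)}$; $j^\ast=j-2^{k-h-2}$ if $\Delta_{k-1}^{(j)}\subseteq\Delta_{h+1}^{(4i-1)}$; $j^\ast=j$ otherwise (so that $\chi_k^{(j)}\circ\phi_h^{(i)}=\chi_k^{(j^\ast)}$ for $(k,j)\notin\mathbb F_h^{(i)}$). Then $\Phi_h^{(i)}(\mathbb F):=\{(h+1,2i-1),(h+1,2i)\}\cup\{(k,j^\ast):(k,j)\in\mathbb F\setminus\mathbb F_h^{(i)}\}$. *)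

theory Defs
  imports "HOL-Analysis.Analysis"
begin

definition dyad :: "nat \<Rightarrow> nat \<Rightarrow> real set" where
  "dyad k j = {(real j - 1) / 2 ^ k ..< real j / 2 ^ k}"

definition haar :: "nat \<Rightarrow> nat \<Rightarrow> real \<Rightarrow> real" where
  "haar k j t =
     (if t \<in> dyad k (2 * j - 1) then 2 powr ((real k - 1) / 2)
      else if t \<in> dyad k (2 * j) then - (2 powr ((real k - 1) / 2))
      else 0)"

definition Dtree :: "(nat \<times> nat) set" where
  "Dtree = {(k, j). 1 \<le> k \<and> 1 \<le> j \<and> j \<le> 2 ^ (k - 1)}"

definition phi :: "nat \<Rightarrow> nat \<Rightarrow> real \<Rightarrow> real" where
  "phi h i t =
     (if t \<in> dyad (h + 1) (4 * i - 2) then t + 1 / 2 ^ (h + 1)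
      else if t \<in> dyad (h + 1) (4 * i - 1) then t - 1 / 2 ^ (h + 1)
      else t)"

definition admissible :: "(nat \<times> nat) set \<Rightarrow> nat \<Rightarrow> nat \<Rightarrow> bool" where
  "admissible F h i \<longleftrightarrow> (h + 1, 2 * i - 1) \<notin> F \<and> (h + 1, 2 * i) \<notin> F"

definition fork :: "nat \<Rightarrow> nat \<Rightarrow> (nat \<times> nat) set" where
  "fork h i = {(h, i), (h + 1, 2 * i - 1), (h + 1, 2 * i)}"

definition jstar :: "nat \<Rightarrow> nat \<Rightarrow> nat \<Rightarrow> nat \<Rightarrow> nat" where
  "jstar h i k j =
     (if dyad (k - 1) j \<subseteq> dyad (h + 1) (4 * i - 2) then j + 2 ^ (k - h - 2)
      else if dyad (k - 1) j \<subseteq> dyad (h + 1) (4 * i - 1) then j - 2 ^ (k - h - 2)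
      else j)"

definition Phi :: "nat \<Rightarrow> nat \<Rightarrow> (nat \<times> nat) set \<Rightarrow> (nat \<times> nat) set" where
  "Phi h i F = {(h + 1, 2 * i - 1), (h + 1, 2 * i)}
      \<union> (\<lambda>(k, j). (k, jstar h i k j)) ` (F - fork h i)"

end

theory Submission imports Defs begin

lemma dyad_floor: "t \<in> dyad n j \<longleftrightarrow> \<lfloor>t * 2 ^ n\<rfloor> = int j - 1"
  unfolding dyad_def by (simp add: floor_eq_iff pos_divide_le_eq pos_less_divide_eq)

lemma floor_level:
  fixes x :: real
  assumes "n \<le> K"
  shows "\<lfloor>x * 2 ^ n\<rfloor> = \<lfloor>x * 2 ^ K\<rfloor> div 2 ^ (K - n)"
proof -
  have K: "(2::real) ^ K = 2 ^ n * 2 ^ (K - n)"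
    using assms by (simp flip: power_add)
  have "x * 2 ^ n = (x * 2 ^ K) / real_of_int (2 ^ (K - n))"
    by (simp add: K)
  then show ?thesis using floor_divide_real_eq_div[of "2 ^ (K - n)" "x * 2 ^ K"] by simp
qed

lemma dyad_nest:
  assumes "n \<le> K" "x \<in> dyad K a" "x \<in> dyad n b" "y \<in> dyad K a"
  shows "y \<in> dyad n b"
  using assms floor_level[OF assms(1), of x] floor_level[OF assms(1), of y]
  by (simp add: dyad_floor)

lemma dyad_uniq: "t \<in> dyad n a \<Longrightarrow> t \<in> dyad n b \<Longrightarrow> a = b"
  by (simp add: dyad_floor)

lemma dyad_shift: "t + real m / 2 ^ k \<in> dyad k (j + m) \<longleftrightarrow> t \<in> dyad k j"
proof -
  have e1: "(real (j + m) - 1) / 2 ^ k = (real j - 1) / 2 ^ k + real m / 2 ^ k"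
    by (simp add: field_simps)
  have e2: "real (j + m) / 2 ^ k = real j / 2 ^ k + real m / 2 ^ k"
    by (simp add: field_simps)
  show ?thesis unfolding dyad_def atLeastLessThan_iff e1 e2 by linarith
qed

lemma dyad_half:
  assumes "j \<ge> 1"
  shows "dyad (Suc m) (2*j-1) \<subseteq> dyad m j" "dyad (Suc m) (2*j) \<subseteq> dyad m j"
    "dyad m j \<subseteq> dyad (Suc m) (2*j-1) \<union> dyad (Suc m) (2*j)"
  using assms unfolding dyad_def by (auto simp: field_simps of_nat_diff)

definition C :: "nat \<Rightarrow> real" where "C k = 2 powr ((real k - 1) / 2)"

lemma haar_floor:
  assumes "j \<ge> 1"
  shows "haar k j t = (if \<lfloor>t * 2 ^ k\<rfloor> = 2 * int j - 2 then C k
     else if \<lfloor>t * 2 ^ k\<rfloor> = 2 * int j - 1 then - C k else 0)"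
  using assms unfolding haar_def C_def by (simp add: dyad_floor of_nat_diff)

lemma C_Suc: "C (Suc h) = C h * sqrt 2"
proof -
  have "C (Suc h) = 2 powr ((real h - 1) / 2 + 1/2)" unfolding C_def by (simp add: field_simps)
  also have "\<dots> = C h * 2 powr (1/2)" unfolding C_def by (simp add: powr_add)
  finally show ?thesis by (simp add: powr_half_sqrt)
qed

lemma phi_floor:
  assumes "i \<ge> 1"
  shows "\<lfloor>phi h i t * 2 ^ (h+1)\<rfloor> = (if \<lfloor>t * 2 ^ (h+1)\<rfloor> = 4 * int i - 3 then \<lfloor>t * 2 ^ (h+1)\<rfloor> + 1
     else if \<lfloor>t * 2 ^ (h+1)\<rfloor> = 4 * int i - 2 then \<lfloor>t * 2 ^ (h+1)\<rfloor> - 1 else \<lfloor>t * 2 ^ (h+1)\<rfloor>)"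
proof -
  define M :: real where "M = 2 ^ (h+1)"
  have M0: "M > 0" unfolding M_def by simp
  have e1: "(t + 1 / M) * M = t * M + 1" using M0 by (simp add: field_simps)
  have e2: "(t - 1 / M) * M = t * M - 1" using M0 by (simp add: field_simps)
  have f1: "\<lfloor>(t + 1 / M) * M\<rfloor> = \<lfloor>t * M\<rfloor> + 1" unfolding e1 by simp
  have f2: "\<lfloor>(t - 1 / M) * M\<rfloor> = \<lfloor>t * M\<rfloor> - 1" unfolding e2 by simp
  have q2: "t \<in> dyad (h + 1) (4 * i - 2) \<longleftrightarrow> \<lfloor>t * M\<rfloor> = 4 * int i - 3"
    unfolding M_def dyad_floor using assms by auto
  have q3: "t \<in> dyad (h + 1) (4 * i - 1) \<longleftrightarrow> \<lfloor>t * M\<rfloor> = 4 * int i - 2"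
    unfolding M_def dyad_floor using assms by auto
  have "phi h i t = (if t \<in> dyad (h + 1) (4 * i - 2) then t + 1 / M
      else if t \<in> dyad (h + 1) (4 * i - 1) then t - 1 / M else t)"
    unfolding phi_def M_def by simp
  then show ?thesis unfolding M_def[symmetric] using f1 f2 q2 q3 by auto
qed

lemma haar_fork:
  assumes h1: "h \<ge> 1" and i1: "i \<ge> 1"
  shows "haar h i (phi h i t) = (haar (h+1) (2*i-1) t + haar (h+1) (2*i) t) / sqrt 2"
proof -
  define a where "a = \<lfloor>t * 2 ^ (h+1)\<rfloor>"
  define b where "b = \<lfloor>phi h i t * 2 ^ (h+1)\<rfloor>"
  have b: "b = (if a = 4 * int i - 3 then a + 1 else if a = 4 * int i - 2 then a - 1 else a)"
    unfolding a_def b_def using phi_floor[OF i1] by simp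
  have fb: "\<lfloor>phi h i t * 2 ^ h\<rfloor> = b div 2"
    unfolding b_def using floor_level[of h "h+1" "phi h i t"] by simp
  have L: "haar h i (phi h i t) = (if b div 2 = 2 * int i - 2 then C h
     else if b div 2 = 2 * int i - 1 then - C h else 0)"
    using haar_floor[OF i1, of h "phi h i t"] fb by simp
  have R1: "haar (h+1) (2*i-1) t = (if a = 4 * int i - 4 then C h * sqrt 2
     else if a = 4 * int i - 3 then - (C h * sqrt 2) else 0)"
    using haar_floor[of "2*i-1" "h+1" t] i1 C_Suc[of h] unfolding a_def by (simp add: of_nat_diff)
  have R2: "haar (h+1) (2*i) t = (if a = 4 * int i - 2 then C h * sqrt 2
     else if a = 4 * int i - 1 then - (C h * sqrt 2) else 0)"
    using haar_floor[of "2*i" "h+1" t] i1 C_Suc[of h] unfolding a_def by simp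
  show ?thesis
  proof -
    consider "a = 4 * int i - 4" | "a = 4 * int i - 3" | "a = 4 * int i - 2" | "a = 4 * int i - 1"
      | "a \<noteq> 4 * int i - 4 \<and> a \<noteq> 4 * int i - 3 \<and> a \<noteq> 4 * int i - 2 \<and> a \<noteq> 4 * int i - 1" by blast
    then show ?thesis
    proof cases
      case 1
      have "(a div 2) = 2 * int i - 2" using 1 by presburger
      then show ?thesis unfolding L R1 R2 b using 1 by simp
    next
      case 2
      have "(a + 1) div 2 = 2 * int i - 1" using 2 by presburger
      then show ?thesis unfolding L R1 R2 b using 2 by simp
    next
      case 3
      have "(a - 1) div 2 = 2 * int i - 2" using 3 by presburger
      then show ?thesis unfolding L R1 R2 b using 3 by simp
    next
      case 4
      have "(a div 2) = 2 * int i - 1" using 4 by presburger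
      then show ?thesis unfolding L R1 R2 b using 4 by simp
    next
      case 5
      have "a div 2 \<noteq> 2 * int i - 2 \<and> a div 2 \<noteq> 2 * int i - 1" using 5 by presburger
      then show ?thesis unfolding L R1 R2 b using 5 by simp
    qed
  qed
qed

lemma haar_support:
  assumes "j \<ge> 1" "haar (Suc m) j t \<noteq> 0"
  shows "t \<in> dyad m j"
  using assms dyad_half[OF assms(1), of m] unfolding haar_def by (auto split: if_splits)

lemma haar_shift:
  assumes "j \<ge> 1"
  shows "haar (Suc m) (j + s) (t + real s / 2 ^ m) = haar (Suc m) j t"
proof -
  have e: "real s / 2 ^ m = real (2 * s) / 2 ^ Suc m" by simp
  have a: "2 * (j + s) - 1 = (2 * j - 1) + 2 * s" "2 * (j + s) = 2 * j + 2 * s" using assms by auto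
  have s1: "t + real s / 2 ^ m \<in> dyad (Suc m) (2 * (j + s) - 1) \<longleftrightarrow> t \<in> dyad (Suc m) (2 * j - 1)"
    unfolding e a(1) by (rule dyad_shift)
  have s2: "t + real s / 2 ^ m \<in> dyad (Suc m) (2 * (j + s)) \<longleftrightarrow> t \<in> dyad (Suc m) (2 * j)"
    unfolding e a(2) by (rule dyad_shift)
  show ?thesis unfolding haar_def s1 s2 ..
qed

lemma haar_cell:
  assumes "k \<le> K" "t \<in> dyad K a" "t' \<in> dyad K a"
  shows "haar k j t = haar k j t'"
proof -
  have "\<And>b. t \<in> dyad k b \<longleftrightarrow> t' \<in> dyad k b"
    using dyad_nest[OF assms(1)] assms(2,3) by blast
  then show ?thesis unfolding haar_def by simp
qed

lemma dyad_mem: "(real j - 1) / 2 ^ m \<in> dyad m j"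
  unfolding dyad_def by (simp add: divide_strict_right_mono)

lemma dyad_not_sub:
  assumes "K < n"
  shows "\<not> dyad K j \<subseteq> dyad n b"
proof
  assume S: "dyad K j \<subseteq> dyad n b"
  define p where "p = (real j - 1) / 2 ^ K"
  have lt: "(1::real) / 2 ^ n < 1 / 2 ^ K"
    using assms by (simp add: divide_strict_left_mono power_strict_increasing)
  have "p \<in> dyad K j" unfolding p_def by (rule dyad_mem)
  moreover have "p + 1 / 2 ^ n \<in> dyad K j"
    using lt unfolding p_def dyad_def by (auto simp: add_divide_distrib diff_divide_distrib)
  ultimately have "p \<in> dyad n b" "p + 1 / 2 ^ n \<in> dyad n b" using S by auto
  then show False unfolding dyad_def by (auto simp: add_divide_distrib diff_divide_distrib)
qed

context
  fixes h i :: nat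
  assumes h1: "1 \<le> h" and i1: "1 \<le> i"
begin

lemma Q23_disj: "t \<in> dyad (h+1) (4*i-2) \<Longrightarrow> t \<notin> dyad (h+1) (4*i-1)"
  using dyad_uniq[of t "h+1" "4*i-2" "4*i-1"] i1 by auto

lemma Qshift: "y \<in> dyad (h+1) (4*i-2) \<longleftrightarrow> y + 1 / 2 ^ (h+1) \<in> dyad (h+1) (4*i-1)"
proof -
  have "4*i-1 = (4*i-2) + 1" using i1 by simp
  then show ?thesis using dyad_shift[of y 1 "h+1" "4*i-2"] by simp
qed

lemma Q2_sub: "dyad (h+1) (4*i-2) \<subseteq> dyad h (2*i-1)"
proof -
  have "2*(2*i-1) = 4*i-2" using i1 by simp
  then show ?thesis using dyad_half(2)[of "2*i-1" h] i1 by simp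
qed

lemma Q3_sub: "dyad (h+1) (4*i-1) \<subseteq> dyad h (2*i)"
proof -
  have "2*(2*i)-1 = 4*i-1" using i1 by simp
  then show ?thesis using dyad_half(1)[of "2*i" h] i1 by simp
qed

lemma H_sub: "dyad h (2*i-1) \<subseteq> dyad (h-1) i" "dyad h (2*i) \<subseteq> dyad (h-1) i"
  using dyad_half[of i "h-1"] i1 h1 by auto

lemma phi_Q2: "t \<in> dyad (h+1) (4*i-2) \<Longrightarrow> phi h i t = t + 1 / 2 ^ (h+1)"
  unfolding phi_def by simp

lemma phi_Q3: "t \<in> dyad (h+1) (4*i-1) \<Longrightarrow> phi h i t = t - 1 / 2 ^ (h+1)"
  unfolding phi_def using Q23_disj by auto

lemma phi_else: "t \<notin> dyad (h+1) (4*i-2) \<Longrightarrow> t \<notin> dyad (h+1) (4*i-1) \<Longrightarrow> phi h i t = t"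
  unfolding phi_def by simp

lemma phi_Q23: "t \<in> dyad (h+1) (4*i-2) \<union> dyad (h+1) (4*i-1) \<Longrightarrow>
    phi h i t \<in> dyad (h+1) (4*i-2) \<union> dyad (h+1) (4*i-1)"
proof -
  assume a: "t \<in> dyad (h+1) (4*i-2) \<union> dyad (h+1) (4*i-1)"
  show ?thesis
  proof (cases "t \<in> dyad (h+1) (4*i-2)")
    case True
    then show ?thesis using phi_Q2 Qshift by auto
  next
    case False
    then have t3: "t \<in> dyad (h+1) (4*i-1)" using a by auto
    have "t - 1 / 2 ^ (h+1) \<in> dyad (h+1) (4*i-2)" using Qshift[of "t - 1 / 2 ^ (h+1)"] t3 by simp
    then show ?thesis using phi_Q3[OF t3] by auto
  qed
qed

lemma low_same:
  assumes k1: "1 \<le> k" and kh: "k \<le> h+1" and j1: "1 \<le> j" and nf: "(k,j) \<notin> fork h i"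
    and v: "v \<in> dyad (h+1) (4*i-2) \<union> dyad (h+1) (4*i-1)"
    and v': "v' \<in> dyad (h+1) (4*i-2) \<union> dyad (h+1) (4*i-1)"
  shows "haar k j v = haar k j v'"
proof -
  have vh: "v \<in> dyad h (2*i-1) \<union> dyad h (2*i)" "v' \<in> dyad h (2*i-1) \<union> dyad h (2*i)"
    using v v' Q2_sub Q3_sub by auto
  then have vh1: "v \<in> dyad (h-1) i" "v' \<in> dyad (h-1) i" using H_sub by auto
  consider "k \<le> h - 1" | "k = h" | "k = h+1" using kh h1 by linarith
  then show ?thesis
  proof cases
    case 1
    then show ?thesis using haar_cell[OF 1 vh1] by simp
  next
    case 2
    then have ji: "j \<noteq> i" using nf unfolding fork_def by auto
    have "haar h j w = 0" if "w \<in> dyad (h-1) i" for w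
    proof (rule ccontr)
      assume "haar h j w \<noteq> 0"
      then have "w \<in> dyad (h-1) j" using haar_support[OF j1, of "h-1" w] h1 by simp
      then show False using dyad_uniq that ji by blast
    qed
    then show ?thesis using vh1 2 by simp
  next
    case 3
    then have ji: "j \<noteq> 2*i-1" "j \<noteq> 2*i" using nf unfolding fork_def by auto
    have "haar (Suc h) j w = 0" if "w \<in> dyad h (2*i-1) \<union> dyad h (2*i)" for w
    proof (rule ccontr)
      assume "haar (Suc h) j w \<noteq> 0"
      then have "w \<in> dyad h j" using haar_support[OF j1, of h w] by simp
      then show False using dyad_uniq that ji by blast
    qed
    then show ?thesis using vh 3 by simp
  qed
qed

lemma main_low:
  assumes k1: "1 \<le> k" and kh: "k \<le> h+1" and j1: "1 \<le> j" and nf: "(k,j) \<notin> fork h i"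
  shows "haar k j (phi h i t) = haar k j t"
proof (cases "t \<in> dyad (h+1) (4*i-2) \<union> dyad (h+1) (4*i-1)")
  case True
  then show ?thesis using low_same[OF assms phi_Q23[OF True] True] by simp
next
  case False
  then show ?thesis using phi_else by auto
qed

lemma jstar_low:
  assumes k1: "1 \<le> k" and kh: "k \<le> h+1"
  shows "jstar h i k j = j"
  using dyad_not_sub[of "k-1" "h+1" j] assms unfolding jstar_def by auto

lemma delta_eq: "h + 1 \<le> m \<Longrightarrow> real (2 ^ (m - h - 1)) / 2 ^ m = (1::real) / 2 ^ (h+1)"
proof -
  assume a: "h + 1 \<le> m"
  obtain d where d: "m = d + (h+1)" using a le_Suc_ex by (metis add.commute)
  have "(2::real) ^ m = 2 ^ (m - h - 1) * 2 ^ (h+1)" unfolding d by (simp add: power_add)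
  then show ?thesis by simp
qed

lemma jstar_high: "h + 1 \<le> m \<Longrightarrow> jstar h i (Suc m) j =
   (if dyad m j \<subseteq> dyad (h+1) (4*i-2) then j + 2 ^ (m - h - 1)
    else if dyad m j \<subseteq> dyad (h+1) (4*i-1) then j - 2 ^ (m - h - 1) else j)"
  unfolding jstar_def by (simp add: Suc_diff_le)

lemma Q3_big:
  assumes m: "h + 1 \<le> m" and D3: "dyad m j \<subseteq> dyad (h+1) (4*i-1)" and j1: "1 \<le> j"
  shows "2 ^ (m - h - 1) < j"
proof -
  define s :: nat where "s = 2 ^ (m - h - 1)"
  have s0: "s > 0" unfolding s_def by simp
  define p where "p = (real j - 1) / 2 ^ m"
  have "p \<in> dyad (h+1) (4*i-1)" using D3 dyad_mem[of j m] unfolding p_def by auto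
  then have fl: "\<lfloor>p * 2 ^ (h+1)\<rfloor> = 4 * int i - 2" using i1 by (simp add: dyad_floor)
  obtain d where d: "m = d + (h+1)" using m le_Suc_ex by (metis add.commute)
  have "(2::real) ^ m = real s * 2 ^ (h+1)" unfolding s_def d by (simp add: power_add)
  then have "p * 2 ^ (h+1) = real (j - 1) / real s" unfolding p_def using j1 by (simp add: of_nat_diff)
  then have "int ((j - 1) div s) = 4 * int i - 2" using fl floor_divide_of_nat_eq[of "j-1" s, where 'a=real] by simp
  then have "(j - 1) div s \<noteq> 0" using i1 by linarith
  then have "s \<le> j - 1" by (metis div_less not_le)
  then show ?thesis unfolding s_def using j1 by linarith
qed

lemma main_high:
  assumes m: "h + 1 \<le> m" and j1: "1 \<le> j"
  shows "haar (Suc m) j (phi h i t) = haar (Suc m) (jstar h i (Suc m) j) t"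
proof -
  define s :: nat where "s = 2 ^ (m - h - 1)"
  define d :: real where "d = 1 / 2 ^ (h+1)"
  define Q2 where "Q2 = dyad (h+1) (4*i-2)"
  define Q3 where "Q3 = dyad (h+1) (4*i-1)"
  have ds: "real s / 2 ^ m = d" unfolding s_def d_def using delta_eq[OF m] .
  have js: "jstar h i (Suc m) j = (if dyad m j \<subseteq> Q2 then j + s
    else if dyad m j \<subseteq> Q3 then j - s else j)"
    unfolding s_def Q2_def Q3_def using jstar_high[OF m] .
  have hs: "haar (Suc m) (j' + s) (y + d) = haar (Suc m) j' y" if "1 \<le> j'" for j' y
    using haar_shift[OF that, of m s y] ds by simp
  have sh: "y + d \<in> dyad m (j' + s) \<longleftrightarrow> y \<in> dyad m j'" for j' y
    using dyad_shift[of y s m j'] ds by simp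
  have Qs: "y \<in> Q2 \<longleftrightarrow> y + d \<in> Q3" for y unfolding Q2_def Q3_def d_def by (rule Qshift)
  have disj: "y \<in> Q2 \<Longrightarrow> y \<notin> Q3" for y unfolding Q2_def Q3_def by (rule Q23_disj)
  have sup: "haar (Suc m) j' y = 0" if "1 \<le> j'" "y \<notin> dyad m j'" for j' y
    using haar_support[OF that(1)] that(2) by blast
  have nest: "dyad m j \<subseteq> Q" if "y \<in> dyad m j" "y \<in> Q" "Q = Q2 \<or> Q = Q3" for y Q
    using dyad_nest[of "h+1" m y j] that m unfolding Q2_def Q3_def by auto
  have p2: "t \<in> Q2 \<Longrightarrow> phi h i t = t + d" unfolding Q2_def d_def by (rule phi_Q2)
  have p3: "t \<in> Q3 \<Longrightarrow> phi h i t = t - d" unfolding Q3_def d_def by (rule phi_Q3)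
  have pe: "t \<notin> Q2 \<Longrightarrow> t \<notin> Q3 \<Longrightarrow> phi h i t = t" unfolding Q2_def Q3_def by (rule phi_else)
  show ?thesis
  proof (cases "dyad m j \<subseteq> Q2")
    case A: True
    have J: "jstar h i (Suc m) j = j + s" using js A by simp
    have DS: "dyad m (j + s) \<subseteq> Q3"
    proof
      fix y assume "y \<in> dyad m (j + s)"
      then have "y - d \<in> dyad m j" using sh[of "y - d" "j"] by simp
      then have "y - d \<in> Q2" using A by auto
      then show "y \<in> Q3" using Qs[of "y - d"] by simp
    qed
    show ?thesis unfolding J
    proof (cases "t \<in> Q2")
      case True
      have "t + d \<in> Q3" using True Qs by simp
      then have "t + d \<notin> dyad m j" using A disj by blast
      moreover have "t \<notin> dyad m (j + s)" using DS True disj by blast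
      ultimately show "haar (Suc m) j (phi h i t) = haar (Suc m) (j + s) t"
        using p2[OF True] sup j1 by simp
    next
      case False
      show "haar (Suc m) j (phi h i t) = haar (Suc m) (j + s) t"
      proof (cases "t \<in> Q3")
        case True
        show ?thesis using p3[OF True] hs[OF j1, of "t - d"] by simp
      next
        case F3: False
        have "t \<notin> dyad m j" using A False by blast
        moreover have "t \<notin> dyad m (j + s)" using DS F3 by blast
        ultimately show ?thesis using pe[OF False F3] sup j1 by simp
      qed
    qed
  next
    case nA: False
    show ?thesis
    proof (cases "dyad m j \<subseteq> Q3")
      case B: True
      have J: "jstar h i (Suc m) j = j - s" using js B nA by simp
      have sj: "s < j" unfolding s_def using Q3_big[OF m _ j1] B unfolding Q3_def by simp
      define j' where "j' = j - s"
      have jj: "j = j' + s" and j'1: "1 \<le> j'" unfolding j'_def using sj by auto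
      have DS: "dyad m j' \<subseteq> Q2"
      proof
        fix y assume "y \<in> dyad m j'"
        then have "y + d \<in> dyad m j" using sh[of y j'] jj by simp
        then have "y + d \<in> Q3" using B by auto
        then show "y \<in> Q2" using Qs by simp
      qed
      show ?thesis unfolding J j'_def[symmetric]
      proof (cases "t \<in> Q2")
        case True
        show "haar (Suc m) j (phi h i t) = haar (Suc m) j' t"
          using p2[OF True] hs[OF j'1, of t] jj by simp
      next
        case False
        show "haar (Suc m) j (phi h i t) = haar (Suc m) j' t"
        proof (cases "t \<in> Q3")
          case True
          have "t - d \<in> Q2" using Qs[of "t - d"] True by simp
          then have "t - d \<notin> dyad m j" using B disj by blast
          moreover have "t \<notin> dyad m j'" using DS True disj by blast
          ultimately show ?thesis using p3[OF True] sup j1 j'1 by simp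
        next
          case F3: False
          have "t \<notin> dyad m j" using B F3 by blast
          moreover have "t \<notin> dyad m j'" using DS False by blast
          ultimately show ?thesis using pe[OF False F3] sup j1 j'1 by simp
        qed
      qed
    next
      case nB: False
      have J: "jstar h i (Suc m) j = j" using js nA nB by simp
      have n2: "y \<notin> dyad m j" if "y \<in> Q2" for y using nest[of y Q2] nA that by blast
      have n3: "y \<notin> dyad m j" if "y \<in> Q3" for y using nest[of y Q3] nB that by blast
      show ?thesis unfolding J
      proof (cases "t \<in> Q2")
        case True
        have "t + d \<in> Q3" using True Qs by simp
        then show "haar (Suc m) j (phi h i t) = haar (Suc m) j t"
          using p2[OF True] sup[OF j1] n2[OF True] n3 by simp
      next
        case False
        show "haar (Suc m) j (phi h i t) = haar (Suc m) j t"
        proof (cases "t \<in> Q3")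
          case True
          have "t - d \<in> Q2" using Qs[of "t - d"] True by simp
          then show ?thesis using p3[OF True] sup[OF j1] n2 n3[OF True] by simp
        next
          case F3: False
          show ?thesis using pe[OF False F3] by simp
        qed
      qed
    qed
  qed
qed

lemma jstar_props:
  assumes k1: "1 \<le> k" and j1: "1 \<le> j"
  shows "jstar h i k (jstar h i k j) = j \<and> 1 \<le> jstar h i k j"
proof (cases "k \<le> h + 1")
  case True
  then show ?thesis using jstar_low[OF k1 True] j1 by simp
next
  case False
  then obtain m where km: "k = Suc m" and m: "h + 1 \<le> m" by (metis Suc_le_D not_less_eq_eq)
  define s :: nat where "s = 2 ^ (m - h - 1)"
  define d :: real where "d = 1 / 2 ^ (h+1)"
  define Q2 where "Q2 = dyad (h+1) (4*i-2)"
  define Q3 where "Q3 = dyad (h+1) (4*i-1)"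
  have ds: "real s / 2 ^ m = d" unfolding s_def d_def using delta_eq[OF m] .
  have js: "jstar h i k j' = (if dyad m j' \<subseteq> Q2 then j' + s
    else if dyad m j' \<subseteq> Q3 then j' - s else j')" for j'
    unfolding s_def Q2_def Q3_def km using jstar_high[OF m] .
  have sh: "y + d \<in> dyad m (j' + s) \<longleftrightarrow> y \<in> dyad m j'" for j' y
    using dyad_shift[of y s m j'] ds by simp
  have Qs: "y \<in> Q2 \<longleftrightarrow> y + d \<in> Q3" for y unfolding Q2_def Q3_def d_def by (rule Qshift)
  have disj: "y \<in> Q2 \<Longrightarrow> y \<notin> Q3" for y unfolding Q2_def Q3_def by (rule Q23_disj)
  have ne: "dyad m j' \<noteq> {}" for j' using dyad_mem by blast
  show ?thesis
  proof (cases "dyad m j \<subseteq> Q2")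
    case A: True
    have DS: "dyad m (j + s) \<subseteq> Q3"
    proof
      fix y assume "y \<in> dyad m (j + s)"
      then have "y - d \<in> dyad m j" using sh[of "y - d" "j"] by simp
      then have "y - d \<in> Q2" using A by auto
      then show "y \<in> Q3" using Qs[of "y - d"] by simp
    qed
    have "\<not> dyad m (j + s) \<subseteq> Q2" using DS disj ne[of "j+s"] by blast
    then show ?thesis using js[of j] js[of "j+s"] A DS j1 by simp
  next
    case nA: False
    show ?thesis
    proof (cases "dyad m j \<subseteq> Q3")
      case B: True
      have sj: "s < j" unfolding s_def using Q3_big[OF m _ j1] B unfolding Q3_def by simp
      define j' where "j' = j - s"
      have jj: "j = j' + s" and j'1: "1 \<le> j'" unfolding j'_def using sj by auto
      have DS: "dyad m j' \<subseteq> Q2"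
      proof
        fix y assume "y \<in> dyad m j'"
        then have "y + d \<in> dyad m j" using sh[of y j'] jj by simp
        then have "y + d \<in> Q3" using B by auto
        then show "y \<in> Q2" using Qs by simp
      qed
      show ?thesis using js[of j] js[of j'] nA B DS j'1 jj unfolding j'_def[symmetric] by simp
    next
      case nB: False
      show ?thesis using js[of j] nA nB j1 by simp
    qed
  qed
qed

lemma main_all:
  assumes k1: "1 \<le> k" and j1: "1 \<le> j" and nf: "(k,j) \<notin> fork h i"
  shows "haar k j (phi h i t) = haar k (jstar h i k j) t"
proof (cases "k \<le> h + 1")
  case True
  then show ?thesis using main_low[OF k1 True j1 nf] jstar_low[OF k1 True] by simp
next
  case False
  then obtain m where km: "k = Suc m" and m: "h + 1 \<le> m" by (metis Suc_le_D not_less_eq_eq)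
  show ?thesis unfolding km using main_high[OF m j1] .
qed

end


theorem lemma3p7:
  fixes F :: "(nat \<times> nat) set" and h i :: nat
    and x :: "nat \<times> nat \<Rightarrow> 'a::banach"
  assumes "finite F" and "F \<subseteq> Dtree"
    and "(h, i) \<in> F" and "admissible F h i"
  shows "\<exists>y :: nat \<times> nat \<Rightarrow> 'a.
           (\<forall>t \<in> {0..<1}.
              (\<Sum>(k, j)\<in>F. haar k j (phi h i t) *\<^sub>R x (k, j))
              = (\<Sum>(k, j)\<in>Phi h i F. haar k j t *\<^sub>R y (k, j)))
         \<and> (\<Sum>(k, j)\<in>F. (norm (x (k, j)))\<^sup>2)
           = (\<Sum>(k, j)\<in>Phi h i F. (norm (y (k, j)))\<^sup>2)"
proof -
  note fin = assms(1) and FD = assms(2) and hiF = assms(3) and adm = assms(4)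
  have h1: "1 \<le> h" and i1: "1 \<le> i" using hiF FD unfolding Dtree_def by auto
  define g where "g = (\<lambda>(k, j). (k, jstar h i k j))"
  define P where "P = {(h + 1, 2 * i - 1), (h + 1, 2 * i)}"
  define G where "G = F - fork h i"
  have GF: "F = insert (h, i) G" "(h, i) \<notin> G"
    using adm hiF unfolding G_def fork_def admissible_def by auto
  have finG: "finite G" using fin unfolding G_def by simp
  have PhiE: "Phi h i F = P \<union> g ` G" unfolding Phi_def P_def g_def G_def by simp
  have GD: "\<And>k j. (k, j) \<in> G \<Longrightarrow> 1 \<le> k \<and> 1 \<le> j \<and> (k, j) \<notin> fork h i"
    using FD unfolding G_def Dtree_def by auto
  have gg: "g (g p) = p" if "p \<in> G" for p
    using that GD jstar_props[OF h1 i1] unfolding g_def by (auto split: prod.splits)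
  have inj: "inj_on g G" by (metis gg inj_onI)
  have disj: "P \<inter> g ` G = {}"
  proof (rule ccontr)
    assume "P \<inter> g ` G \<noteq> {}"
    then obtain k j where kj: "(k, j) \<in> G" "g (k, j) \<in> P" by auto
    then have k: "k = h + 1" unfolding g_def P_def by auto
    then have "jstar h i k j = j" using jstar_low[OF h1 i1] GD[OF kj(1)] by simp
    then have "(k, j) \<in> fork h i" using kj k unfolding g_def P_def fork_def by auto
    then show False using GD[OF kj(1)] by simp
  qed
  have Pne: "(h + 1, 2 * i - 1) \<noteq> (h + 1, 2 * i)" using i1 by simp
  have sumPhi: "sum f (Phi h i F) = f (h + 1, 2 * i - 1) + f (h + 1, 2 * i) + sum (f \<circ> g) G"
    for f :: "nat \<times> nat \<Rightarrow> 'b::comm_monoid_add"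
    unfolding PhiE using sum.union_disjoint[of P "g ` G" f] disj finG Pne sum.reindex[OF inj, of f]
    unfolding P_def by simp
  have sumF: "sum f F = f (h, i) + sum f G" for f :: "nat \<times> nat \<Rightarrow> 'b::comm_monoid_add"
    unfolding GF(1) using GF(2) finG by simp
  define y where "y = (\<lambda>q. if q \<in> P then (1 / sqrt 2) *\<^sub>R x (h, i) else x (g q))"
  have yP: "y (h + 1, 2 * i - 1) = (1 / sqrt 2) *\<^sub>R x (h, i)" "y (h + 1, 2 * i) = (1 / sqrt 2) *\<^sub>R x (h, i)"
    unfolding y_def P_def by auto
  have yg: "y (g p) = x p" if "p \<in> G" for p
  proof -
    have "g p \<notin> P" using disj that by auto
    then show ?thesis unfolding y_def using gg[OF that] by simp
  qed
  show ?thesis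
  proof (intro exI conjI ballI)
    fix t :: real
    let ?f = "\<lambda>(k, j). haar k j t *\<^sub>R y (k, j)"
    have "(\<Sum>(k, j)\<in>Phi h i F. haar k j t *\<^sub>R y (k, j))
       = haar (h+1) (2*i-1) t *\<^sub>R y (h + 1, 2 * i - 1) + haar (h+1) (2*i) t *\<^sub>R y (h + 1, 2 * i)
         + sum (?f \<circ> g) G" using sumPhi[of ?f] by simp
    also have "sum (?f \<circ> g) G = (\<Sum>(k, j)\<in>G. haar k j (phi h i t) *\<^sub>R x (k, j))"
    proof (rule sum.cong)
      fix p assume pG: "p \<in> G"
      obtain k j where p: "p = (k, j)" by fastforce
      have "haar k j (phi h i t) = haar k (jstar h i k j) t"
        using main_all[OF h1 i1] GD pG p by blast
      then show "(?f \<circ> g) p = (\<lambda>(k, j). haar k j (phi h i t) *\<^sub>R x (k, j)) p"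
        using yg[OF pG] unfolding p g_def by simp
    qed simp
    also have "haar (h+1) (2*i-1) t *\<^sub>R y (h + 1, 2 * i - 1) + haar (h+1) (2*i) t *\<^sub>R y (h + 1, 2 * i)
        = haar h i (phi h i t) *\<^sub>R x (h, i)"
      unfolding yP haar_fork[OF h1 i1] by (simp add: scaleR_add_left add_divide_distrib)
    finally show "(\<Sum>(k, j)\<in>F. haar k j (phi h i t) *\<^sub>R x (k, j))
              = (\<Sum>(k, j)\<in>Phi h i F. haar k j t *\<^sub>R y (k, j))"
      using sumF[of "\<lambda>(k, j). haar k j (phi h i t) *\<^sub>R x (k, j)"] by simp
  next
    let ?n = "\<lambda>(k, j). (norm (y (k, j)))\<^sup>2"
    have "(\<Sum>(k, j)\<in>Phi h i F. (norm (y (k, j)))\<^sup>2)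
       = (norm (y (h + 1, 2 * i - 1)))\<^sup>2 + (norm (y (h + 1, 2 * i)))\<^sup>2 + sum (?n \<circ> g) G"
      using sumPhi[of ?n] by simp
    also have "sum (?n \<circ> g) G = (\<Sum>(k, j)\<in>G. (norm (x (k, j)))\<^sup>2)"
    proof (rule sum.cong)
      fix p assume pG: "p \<in> G"
      obtain k j where p: "p = (k, j)" by fastforce
      show "(?n \<circ> g) p = (\<lambda>(k, j). (norm (x (k, j)))\<^sup>2) p"
        using yg[OF pG] unfolding p g_def by simp
    qed simp
    also have "(norm (y (h + 1, 2 * i - 1)))\<^sup>2 + (norm (y (h + 1, 2 * i)))\<^sup>2 = (norm (x (h, i)))\<^sup>2"
      unfolding yP by (simp add: power_mult_distrib power_divide)
    finally show "(\<Sum>(k, j)\<in>F. (norm (x (k, j)))\<^sup>2)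
           = (\<Sum>(k, j)\<in>Phi h i F. (norm (y (k, j)))\<^sup>2)"
      using sumF[of "\<lambda>(k, j). (norm (x (k, j)))\<^sup>2"] by simp
  qed
qed

end
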